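(* Let $a$ be a positive integer and let $L_{a,a} = \{C_{i,1} : 1 \le i \le a+1\} \cup \{C_{1,j} : 1 < j \le a+1\}$, an $L$ polyomino of size $n = 2a+1$. Then on the $n \times n$ board, $\mathrm{cp}_{\mathrm{fixed}}(L_{a,a}) = 1$.
   Context: For integers $i,j$, $C_{i,j}$ denotes the unit square cell in column $i$ and row $j$ of the integer grid (columns numbered left to right, rows numbered top to bottom). A polyomino is a finite set of cells; its size is its number of cells. For a polyomino $\mathcal{P}$ of size $n$ the board is $\mathbb{B} = \{C_{i,j} : 1 \le i,j \le n\}$. The shift of $\mathcal{P}$ by integers $(c,d)$ is $\mathcal{P}+(c,d) = \{C_{x+c,y+d} : C_{x,y} \in \mathcal{P}\}$; a fixed copy of $\mathcal{P}$ is any shift of $\mathcal{P}$ (no rotations or reflections). A set of polyominoes is a valid arrangement if each is contained in $\mathbb{B}$ and they are pairwise disjoint. A fixed packing of $\mathcal{P}$ is a set of fixed copies of $\mathcal{P}$ forming a valid arrangement such that adding any further fixed copy of $\mathcal{P}$ yields an invalid arrangement. The clumsy fixed packing number $\mathrm{cp}_{\mathrm{fixed}}(\mathcal{P})$ is the minimum number of polyominoes in a fixed packing of $\mathcal{P}$ on the $n \times n$ board. *)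

theory Defs
  imports Main
begin

(* A cell C_{i,j} is represented by the pair (i,j) :: int \<times> int  (column i, row j). *)
type_synonym cell = "int \<times> int"
type_synonym polyomino = "cell set"

definition board :: "nat \<Rightarrow> polyomino" where
  "board n = {(i,j). 1 \<le> i \<and> i \<le> int n \<and> 1 \<le> j \<and> j \<le> int n}"

definition shift :: "polyomino \<Rightarrow> int \<Rightarrow> int \<Rightarrow> polyomino" where
  "shift P c d = {(x + c, y + d) | x y. (x, y) \<in> P}"

definition fixed_copy :: "polyomino \<Rightarrow> polyomino \<Rightarrow> bool" where
  "fixed_copy P Q \<longleftrightarrow> (\<exists>c d. Q = shift P c d)"

definition valid_arrangement :: "polyomino \<Rightarrow> polyomino set \<Rightarrow> bool" where
  "valid_arrangement B S \<longleftrightarrow>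
     (\<forall>Q\<in>S. Q \<subseteq> B) \<and> (\<forall>Q\<in>S. \<forall>R\<in>S. Q \<noteq> R \<longrightarrow> Q \<inter> R = {})"

definition fixed_packing :: "polyomino \<Rightarrow> polyomino set \<Rightarrow> bool" where
  "fixed_packing P S \<longleftrightarrow>
     (\<forall>Q\<in>S. fixed_copy P Q) \<and> valid_arrangement (board (card P)) S \<and>
     (\<forall>Q. fixed_copy P Q \<and> Q \<notin> S \<longrightarrow> \<not> valid_arrangement (board (card P)) (insert Q S))"

definition cp_fixed :: "polyomino \<Rightarrow> nat" where
  "cp_fixed P = (LEAST k. \<exists>S. fixed_packing P S \<and> finite S \<and> card S = k)"

definition L_poly :: "nat \<Rightarrow> nat \<Rightarrow> polyomino" where
  "L_poly a b = {(i, 1) | i. 1 \<le> i \<and> i \<le> int a + 1} \<union> {(1, j) | j. 1 < j \<and> j \<le> int b + 1}"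

end

theory Submission
  imports Defs
begin

lemma L_eq: "L_poly a a = (\<lambda>i. (i,1::int)) ` {1..int a+1} \<union> (\<lambda>j. (1::int,j)) ` {2..int a+1}"
  unfolding L_poly_def by auto

lemma L_card: "card (L_poly a a) = 2*a+1"
proof -
  have d: "(\<lambda>i. (i,1::int)) ` {1..int a+1} \<inter> (\<lambda>j. (1::int,j)) ` {2..int a+1} = {}" by auto
  have c1: "card ((\<lambda>i. (i,1::int)) ` {1..int a+1}) = a+1"
    by (subst card_image) (auto simp: inj_on_def)
  have c2: "card ((\<lambda>j. (1::int,j)) ` {2..int a+1}) = a"
    by (subst card_image) (auto simp: inj_on_def)
  show ?thesis unfolding L_eq by (subst card_Un_disjoint) (use d c1 c2 in auto)
qed

lemma mem_shift: "(x,y) \<in> shift P c d \<longleftrightarrow> (x-c, y-d) \<in> P"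
  unfolding shift_def by force

theorem theorem3:
  fixes a :: nat
  assumes "0 < a"
  shows "cp_fixed (L_poly a a) = 1"
proof -
  let ?L = "L_poly a a"
  define P where "P = shift ?L (int a) 0"
  have B: "board (card ?L) = board (2*a+1)" by (simp add: L_card)
  have PB: "P \<subseteq> board (2*a+1)"
    unfolding P_def by (auto simp: board_def shift_def L_poly_def)
  have L0B: "?L \<subseteq> board (2*a+1)"
    by (auto simp: board_def L_poly_def)
  have L0: "?L = shift ?L 0 0" unfolding shift_def by auto
  have key: "Q \<inter> P \<noteq> {}" if "Q = shift ?L c d" "Q \<subseteq> board (2*a+1)" for Q c d
  proof -
    have "(1+c, 1+d) \<in> Q" "(int a+1+c, 1+d) \<in> Q" "(1+c, int a+1+d) \<in> Q"
      using that(1) by (auto simp: mem_shift L_poly_def)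
    hence b: "0 \<le> c" "c \<le> int a" "0 \<le> d" "d \<le> int a"
      using that(2) by (auto simp: board_def)
    have "(int a+1, 1+d) \<in> Q" using that(1) b by (auto simp: mem_shift L_poly_def)
    moreover have "(int a+1, 1+d) \<in> P" using b unfolding P_def
      by (auto simp: mem_shift L_poly_def)
    ultimately show ?thesis by blast
  qed
  have pack: "fixed_packing ?L {P}"
    unfolding fixed_packing_def B
  proof (intro conjI allI impI)
    show "\<forall>Q\<in>{P}. fixed_copy ?L Q" unfolding fixed_copy_def P_def by auto
    show "valid_arrangement (board (2 * a + 1)) {P}"
      using PB unfolding valid_arrangement_def by auto
    fix Q assume h: "fixed_copy ?L Q \<and> Q \<notin> {P}"
    then obtain c d where q: "Q = shift ?L c d" unfolding fixed_copy_def by auto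
    show "\<not> valid_arrangement (board (2 * a + 1)) (insert Q {P})"
    proof
      assume v: "valid_arrangement (board (2 * a + 1)) (insert Q {P})"
      hence "Q \<subseteq> board (2*a+1)" unfolding valid_arrangement_def by auto
      hence "Q \<inter> P \<noteq> {}" using key q by blast
      moreover have "Q \<noteq> P" using h by auto
      ultimately show False using v unfolding valid_arrangement_def by auto
    qed
  qed
  have nz: "\<not> fixed_packing ?L {}"
  proof
    assume "fixed_packing ?L {}"
    hence "\<not> valid_arrangement (board (2*a+1)) {?L}"
      unfolding fixed_packing_def B fixed_copy_def using L0 by blast
    thus False using L0B unfolding valid_arrangement_def by auto
  qed
  show ?thesis unfolding cp_fixed_def
  proof (rule Least_equality)
    show "\<exists>S. fixed_packing ?L S \<and> finite S \<and> card S = 1" using pack by (intro exI[of _ "{P}"]) auto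
    fix y assume "\<exists>S. fixed_packing ?L S \<and> finite S \<and> card S = y"
    then obtain S where "fixed_packing ?L S" "finite S" "card S = y" by auto
    thus "1 \<le> y" using nz by (cases "y = 0") auto
  qed
qed

end
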